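(* Let $\Phi$ be the flow of the vector field $F$ on $T_1\Delta$ defined in the context. Then $\Phi_t(\Delta)\subset\Delta$ for all $t\ge0$, and for each $I\subseteq E$, for all $v\in\Delta_I$ and all $t\in\mathbb R$, $\Phi_t(v)\in\Delta$ if and only if $\Phi_t(v)\in\Delta_I$.
   Context: Let $N\ge2$, $E=\{1,\dots,N\}$, $\alpha>1$, and let $A=(A_{i,j})_{i,j\le N}$ be a symmetric matrix with nonnegative entries, $A_{i,j}>0$ for $i\ne j$, and $\sum_j A_{i,j}$ independent of $i$. Let $\Delta=\{v\in\mathbb R_+^N:\ \sum_i v_i=1,\ v_i\le 3/4 \text{ whenever } A_{i,i}=0\}$. For $v\in\Delta$ let $v^\alpha=(v_1^\alpha,\dots,v_N^\alpha)$, $H(v)=\langle Av^\alpha,v^\alpha\rangle=\sum_{i,j}A_{i,j}v_i^\alpha v_j^\alpha$ (which is positive on $\Delta$) and $\pi_i(v)=v_i^\alpha(Av^\alpha)_i/H(v)$. For $r=0,1$ let $T_r\Delta=\{v\in\mathbb R^N:\sum_iv_i=r\}$, let $\imath:T_1\Delta\to\Delta$ be the nearest-point projection $\imath(v)=\mathrm{argmin}\{\|y-v\|:y\in\Delta\}$, and let $F:T_1\Delta\to T_0\Delta$, $F(v)=-v+\pi(\imath(v))$; $F$ is Lipschitz and $\Phi:\mathbb R\times T_1\Delta\to T_1\Delta$ denotes its flow. For $I\subseteq E$, $\Delta_I=\{v\in\Delta: v_i=0\ \forall i\in E\setminus I\}$. *)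

theory Defs
  imports "HOL-Analysis.Analysis"
begin

text \<open>Vectors in R^N are modelled as real^'n with 'n a finite index type (E = UNIV).
  A is a real^'n^'n matrix, with entries A$i$j.\<close>

definition Delta :: "real^'n^'n \<Rightarrow> (real^'n) set" where
  "Delta A = {v. (\<forall>i. 0 \<le> v$i) \<and> (\<Sum>i\<in>UNIV. v$i) = 1 \<and>
                  (\<forall>i. A$i$i = 0 \<longrightarrow> v$i \<le> 3/4)}"

definition Delta_I :: "real^'n^'n \<Rightarrow> 'n set \<Rightarrow> (real^'n) set" where
  "Delta_I A I = {v \<in> Delta A. \<forall>i \<in> UNIV - I. v$i = 0}"

definition T_Delta :: "real \<Rightarrow> (real^'n) set" where
  "T_Delta r = {v. (\<Sum>i\<in>UNIV. v$i) = r}"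

definition vpow :: "real \<Rightarrow> real^'n \<Rightarrow> real^'n" where
  "vpow \<alpha> v = (\<chi> i. (v$i) powr \<alpha>)"

definition Hfun :: "real^'n^'n \<Rightarrow> real \<Rightarrow> real^'n \<Rightarrow> real" where
  "Hfun A \<alpha> v = (\<Sum>i\<in>UNIV. \<Sum>j\<in>UNIV. A$i$j * (v$i) powr \<alpha> * (v$j) powr \<alpha>)"

definition pifun :: "real^'n^'n \<Rightarrow> real \<Rightarrow> real^'n \<Rightarrow> real^'n" where
  "pifun A \<alpha> v = (\<chi> i. (v$i) powr \<alpha> * (A *v vpow \<alpha> v)$i / Hfun A \<alpha> v)"

definition proj_Delta :: "real^'n^'n \<Rightarrow> real^'n \<Rightarrow> real^'n" where
  "proj_Delta A v = closest_point (Delta A) v"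

definition Ffield :: "real^'n^'n \<Rightarrow> real \<Rightarrow> real^'n \<Rightarrow> real^'n" where
  "Ffield A \<alpha> v = - v + pifun A \<alpha> (proj_Delta A v)"

text \<open>Phi is the flow of F on T_1 Delta: each trajectory starts at v, stays in T_1 Delta
  and solves the ODE x' = F x for all real times.  (F is Lipschitz, so this flow exists
  and is unique.)\<close>
definition is_flow :: "real^'n^'n \<Rightarrow> real \<Rightarrow> (real \<Rightarrow> real^'n \<Rightarrow> real^'n) \<Rightarrow> bool" where
  "is_flow A \<alpha> \<Phi> \<longleftrightarrow> (\<forall>v \<in> T_Delta 1. \<Phi> 0 v = v \<and>
      (\<forall>t. \<Phi> t v \<in> T_Delta 1 \<and>
           ((\<lambda>s. \<Phi> s v) has_vector_derivative Ffield A \<alpha> (\<Phi> t v)) (at t)))"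

end

theory Submission
  imports Defs
begin

lemma comp_deriv:
  assumes "(x has_vector_derivative d) (at s)"
  shows "((\<lambda>s. x s $ i) has_real_derivative d $ i) (at s)"
  using bounded_linear.has_vector_derivative[OF bounded_linear_vec_nth assms]
  by (simp add: has_real_derivative_iff_has_vector_derivative)

lemma exp_mono_sol:
  fixes u q :: "real \<Rightarrow> real"
  assumes d: "\<And>s. (u has_real_derivative (- u s + q s)) (at s)"
    and q: "\<And>s. a \<le> s \<Longrightarrow> s \<le> b \<Longrightarrow> q s \<ge> 0" and ab: "a \<le> b"
  shows "exp a * u a \<le> exp b * u b"
proof (rule deriv_nonneg_imp_mono[where g = "\<lambda>s. exp s * u s" and g' = "\<lambda>s. exp s * q s"])
  fix s assume "s \<in> {a..b}"
  have "((\<lambda>s. exp s * u s) has_real_derivative exp s * u s + exp s * (- u s + q s)) (at s)"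
    by (auto intro!: derivative_eq_intros d)
  then show "((\<lambda>s. exp s * u s) has_real_derivative exp s * q s) (at s)"
    by (simp add: algebra_simps)
  show "exp s * q s \<ge> 0" using q \<open>s \<in> {a..b}\<close> by auto
qed (rule ab)

lemma scal_lower:
  fixes u q :: "real \<Rightarrow> real"
  assumes d: "\<And>s. (u has_real_derivative (- u s + q s)) (at s)"
    and q: "\<And>s. q s \<ge> 0" and "u a \<ge> 0" and ab: "a \<le> b"
  shows "u b \<ge> 0"
proof -
  have "exp a * u a \<le> exp b * u b" using exp_mono_sol[OF d q ab] by auto
  moreover have "exp a * u a \<ge> 0" using assms by auto
  ultimately have "exp b * u b \<ge> 0" by linarith
  then show ?thesis by (simp add: zero_le_mult_iff)
qed

lemma scal_upper:
  fixes u q :: "real \<Rightarrow> real"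
  assumes d: "\<And>s. (u has_real_derivative (- u s + q s)) (at s)"
    and q: "\<And>s. q s \<le> c" and "u a \<le> c" and ab: "a \<le> b"
  shows "u b \<le> c"
proof -
  have d2: "\<And>s. ((\<lambda>s. c - u s) has_real_derivative (- (c - u s) + (c - q s))) (at s)"
  proof -
    fix s
    have "((\<lambda>s. c - u s) has_real_derivative 0 - (- u s + q s)) (at s)"
      by (auto intro!: derivative_eq_intros d)
    then show "((\<lambda>s. c - u s) has_real_derivative (- (c - u s) + (c - q s))) (at s)"
      by (simp add: algebra_simps)
  qed
  have "c - u b \<ge> 0" by (rule scal_lower[OF d2]) (use assms in auto)
  then show ?thesis by simp
qed

lemma gronwall:
  fixes u q :: "real \<Rightarrow> real"
  assumes d: "\<And>s. (u has_real_derivative (- u s + q s)) (at s)"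
    and q: "\<And>s. a \<le> s \<Longrightarrow> s \<le> b \<Longrightarrow> q s \<le> K * u s" and "u a = 0" and ab: "a \<le> b"
  shows "u b \<le> 0"
proof -
  have "exp ((1 - K) * b) * u b \<le> exp ((1 - K) * a) * u a"
  proof (rule deriv_nonpos_imp_antimono[where g = "\<lambda>s. exp ((1 - K) * s) * u s" and g' = "\<lambda>s. exp ((1 - K) * s) * (q s - K * u s)"])
    fix s assume s: "s \<in> {a..b}"
    have "((\<lambda>s. exp ((1 - K) * s) * u s) has_real_derivative
        exp ((1 - K) * s) * ((1-K) * 1) * u s + exp ((1 - K) * s) * (- u s + q s)) (at s)"
      by (auto intro!: derivative_eq_intros d)
    then show "((\<lambda>s. exp ((1 - K) * s) * u s) has_real_derivative exp ((1 - K) * s) * (q s - K * u s)) (at s)"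
      by (simp add: algebra_simps)
    show "exp ((1 - K) * s) * (q s - K * u s) \<le> 0" using q s
      by (simp add: mult_nonneg_nonpos)
  qed (rule ab)
  then have "exp ((1 - K) * b) * u b \<le> 0" using assms by simp
  then show ?thesis by (simp add: mult_le_0_iff)
qed

lemma pi_nonneg:
  assumes "\<forall>i j. 0 \<le> A$i$j"
  shows "0 \<le> pifun A \<alpha> p $ i"
  using assms unfolding pifun_def Hfun_def matrix_vector_mult_def vpow_def
  by (auto intro!: divide_nonneg_nonneg mult_nonneg_nonneg sum_nonneg)

lemma pi_le:
  fixes A :: "real^'n::finite^'n"
  assumes nn: "\<forall>i j. 0 \<le> A$i$j" and sym: "\<forall>i j. A$i$j = A$j$i" and z: "A$i$i = 0"
  shows "pifun A \<alpha> p $ i \<le> 3/4"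
proof -
  define y where "y j = p$j powr \<alpha>" for j
  have y0: "y j \<ge> 0" for j by (simp add: y_def)
  define T where "T = y i * (\<Sum>j\<in>UNIV. A$i$j * y j)"
  have pi: "pifun A \<alpha> p $ i = T / Hfun A \<alpha> p"
    by (simp add: pifun_def T_def y_def matrix_vector_mult_def vpow_def)
  have H: "Hfun A \<alpha> p = (\<Sum>k\<in>UNIV. \<Sum>j\<in>UNIV. A$k$j * y k * y j)"
    by (simp add: Hfun_def y_def)
  have row_i: "(\<Sum>j\<in>UNIV. A$i$j * y i * y j) = T"
    by (simp add: T_def sum_distrib_left algebra_simps)
  have rowk: "(\<Sum>j\<in>UNIV. A$k$j * y k * y j) \<ge> A$k$i * y k * y i" for k
    by (rule member_le_sum[where f="\<lambda>j. A$k$j * y k * y j"]) (use nn y0 in auto)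
  have e1: "(\<Sum>k\<in>UNIV. \<Sum>j\<in>UNIV. A$k$j * y k * y j)
      = (\<Sum>j\<in>UNIV. A$i$j * y i * y j) + (\<Sum>k\<in>UNIV-{i}. \<Sum>j\<in>UNIV. A$k$j * y k * y j)"
    by (simp add: sum.remove)
  have e2: "(\<Sum>k\<in>UNIV-{i}. \<Sum>j\<in>UNIV. A$k$j * y k * y j) \<ge> (\<Sum>k\<in>UNIV-{i}. A$k$i * y k * y i)"
    by (rule sum_mono) (rule rowk)
  have e3: "(\<Sum>k\<in>UNIV-{i}. A$k$i * y k * y i) = (\<Sum>k\<in>UNIV. A$k$i * y k * y i)"
    using sum.remove[of UNIV i "\<lambda>k. A$k$i * y k * y i"] by (simp add: z)
  have e4: "(\<Sum>k\<in>UNIV. A$k$i * y k * y i) = T"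
    by (simp add: T_def sum_distrib_left algebra_simps sym)
  have HT: "Hfun A \<alpha> p \<ge> 2 * T" using H row_i e1 e2 e3 e4 by linarith
  have T0: "T \<ge> 0" using nn y0 by (auto simp: T_def intro!: sum_nonneg mult_nonneg_nonneg)
  show ?thesis
  proof (cases "T = 0")
    case True then show ?thesis by (simp add: pi)
  next
    case False
    then have "T > 0" using T0 by auto
    then have "T / Hfun A \<alpha> p \<le> 1/2" using HT by (simp add: divide_simps)
    then show ?thesis unfolding pi by linarith
  qed
qed

lemma invariant:
  fixes A :: "real^'n::finite^'n" and x :: "real \<Rightarrow> real^'n"
  assumes nn: "\<forall>i j. 0 \<le> A$i$j" and sym: "\<forall>i j. A$i$j = A$j$i"
    and T: "\<And>s. x s \<in> T_Delta 1"
    and d: "\<And>s. (x has_vector_derivative Ffield A \<alpha> (x s)) (at s)"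
    and x0: "x a \<in> Delta A" and ab: "a \<le> b"
  shows "x b \<in> Delta A"
proof -
  have di: "((\<lambda>s. x s $ i) has_real_derivative - (x s $ i) + pifun A \<alpha> (proj_Delta A (x s)) $ i) (at s)" for i s
    using comp_deriv[OF d[of s], of i] by (simp add: Ffield_def)
  have "0 \<le> x b $ i" for i
    by (rule scal_lower[OF di]) (use x0 ab pi_nonneg[OF nn] in \<open>auto simp: Delta_def\<close>)
  moreover have "x b $ i \<le> 3/4" if "A$i$i = 0" for i
    by (rule scal_upper[OF di]) (use x0 ab pi_le[OF nn sym that] that in \<open>auto simp: Delta_def\<close>)
  moreover have "(\<Sum>i\<in>UNIV. x b $ i) = 1" using T[of b] by (simp add: T_Delta_def)
  ultimately show ?thesis by (simp add: Delta_def)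
qed

lemma dsum_ge:
  fixes f :: "'n::finite \<Rightarrow> 'n \<Rightarrow> real"
  assumes "\<forall>k j. f k j \<ge> 0"
  shows "f k j \<le> (\<Sum>k\<in>UNIV. \<Sum>j\<in>UNIV. f k j)"
proof -
  have "f k j \<le> (\<Sum>j\<in>UNIV. f k j)"
    by (rule member_le_sum) (use assms in auto)
  also have "\<dots> \<le> (\<Sum>k\<in>UNIV. \<Sum>j\<in>UNIV. f k j)"
    by (rule member_le_sum[where f="\<lambda>k. \<Sum>j\<in>UNIV. f k j"]) (use assms in \<open>auto intro: sum_nonneg\<close>)
  finally show ?thesis .
qed

lemma Delta_le1:
  assumes "p \<in> Delta A" shows "p$i \<le> 1" "0 \<le> p$i"
proof -
  have "p$i \<le> (\<Sum>j\<in>UNIV. p$j)"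
    by (rule member_le_sum) (use assms in \<open>auto simp: Delta_def\<close>)
  then show "p$i \<le> 1" using assms by (simp add: Delta_def)
  show "0 \<le> p$i" using assms by (simp add: Delta_def)
qed

lemma ex_max_fin:
  fixes f :: "'a \<Rightarrow> real"
  assumes "finite S" "S \<noteq> {}"
  shows "\<exists>m\<in>S. \<forall>k\<in>S. f k \<le> f m"
proof -
  have "Max (f ` S) \<in> f ` S" using assms by (intro Max_in) auto
  then obtain m where "m \<in> S" "f m = Max (f ` S)" by auto
  moreover have "\<forall>k\<in>S. f k \<le> Max (f ` S)" using assms by auto
  ultimately show ?thesis by metis
qed

lemma big_pair:
  fixes A :: "real^'n::finite^'n"
  assumes card: "CARD('n) \<ge> 2" and nn: "\<forall>i j. 0 \<le> A$i$j"
    and pos: "\<forall>i j. i \<noteq> j \<longrightarrow> A$i$j > 0" and p: "p \<in> Delta A"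
  shows "\<exists>k j. A$k$j > 0 \<and> p$k \<ge> 1/(4*real CARD('n)) \<and> p$j \<ge> 1/(4*real CARD('n))"
proof -
  define N where "N = real CARD('n)"
  have Npos: "N \<ge> 2" using card by (simp add: N_def)
  obtain m where m: "\<forall>k. p$k \<le> p$m"
    using ex_max_fin[of "UNIV :: 'n set" "\<lambda>k. p$k"] by auto
  have "1 = (\<Sum>k\<in>UNIV. p$k)" using p by (simp add: Delta_def)
  also have "\<dots> \<le> N * p$m"
    using sum_bounded_above[of "UNIV::'n set" "\<lambda>k. p$k" "p$m"] m by (simp add: N_def)
  finally have pm: "1 \<le> N * p$m" .
  show ?thesis
  proof (cases "A$m$m > 0")
    case True
    have "1/(4*N) \<le> p$m"
    proof -
      have "p$m*(4*N) = 4*(N*p$m)" by simp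
      then have "1 \<le> p$m*(4*N)" using pm by linarith
      then show ?thesis using Npos by (simp add: divide_simps)
    qed
    with True show ?thesis by (auto simp: N_def)
  next
    case False
    then have z: "A$m$m = 0" using nn[rule_format, of m m] by linarith
    then have pm34: "p$m \<le> 3/4" using p by (simp add: Delta_def)
    define S where "S = (UNIV::'n set) - {m}"
    have cS: "card S = CARD('n) - 1" by (simp add: S_def)
    then have "S \<noteq> {}" using card by auto
    then obtain j where jS: "j \<in> S" and j: "\<forall>k\<in>S. p$k \<le> p$j"
      using ex_max_fin[of S "\<lambda>k. p$k"] by (auto simp: S_def)
    have "(\<Sum>k\<in>UNIV. p$k) = p$m + (\<Sum>k\<in>S. p$k)"
      by (simp add: S_def sum.remove)
    then have "(\<Sum>k\<in>S. p$k) \<ge> 1/4" using p pm34 by (simp add: Delta_def)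
    also have "(\<Sum>k\<in>S. p$k) \<le> real (card S) * p$j"
      using sum_bounded_above[of S "\<lambda>k. p$k" "p$j"] j by simp
    also have "\<dots> \<le> N * p$j"
      using cS Delta_le1(2)[OF p, of j] by (intro mult_right_mono) (auto simp: N_def)
    finally have "1/(4*N) \<le> p$j" using Npos by (simp add: divide_simps mult_ac)
    moreover have "A$m$j > 0" using pos jS by (auto simp: S_def)
    moreover have "1/(4*N) \<le> p$m"
    proof -
      have "p$m*(4*N) = 4*(N*p$m)" by simp
      then have "1 \<le> p$m*(4*N)" using pm by linarith
      then show ?thesis using Npos by (simp add: divide_simps)
    qed
    ultimately show ?thesis by (auto simp: N_def)
  qed
qed

lemma H_lower:
  fixes A :: "real^'n::finite^'n"
  assumes card: "CARD('n) \<ge> 2" and a: "\<alpha> > 1" and nn: "\<forall>i j. 0 \<le> A$i$j"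
    and pos: "\<forall>i j. i \<noteq> j \<longrightarrow> A$i$j > 0"
  shows "\<exists>h0>0. \<forall>p\<in>Delta A. Hfun A \<alpha> p \<ge> h0"
proof -
  define d where "d = 1/(4*real CARD('n))"
  have d0: "d > 0" by (simp add: d_def)
  define S where "S = {A$k$j | k j. A$k$j > 0}"
  have fS: "finite S"
    by (rule finite_subset[of _ "range (\<lambda>(k,j). A$k$j)"]) (auto simp: S_def)
  obtain k0 :: 'n where True by auto
  have "UNIV - {k0} \<noteq> {}" using card
    by (metis Diff_empty Diff_insert0 One_nat_def card.empty card.insert finite.emptyI
        insert_Diff insert_absorb insert_not_empty not_numeral_le_zero numeral_le_one_iff semiring_norm(69))
  then obtain j0 where "j0 \<noteq> k0" by auto
  then have "A$k0$j0 > 0" using pos by auto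
  then have "A$k0$j0 \<in> S" unfolding S_def by blast
  then have Sne: "S \<noteq> {}" by auto
  define amin where "amin = Min S"
  have amin0: "amin > 0" using Min_in[OF fS Sne] by (auto simp: amin_def S_def)
  define h0 where "h0 = amin * d powr \<alpha> * d powr \<alpha>"
  have "h0 > 0" using amin0 d0 by (simp add: h0_def)
  moreover have "Hfun A \<alpha> p \<ge> h0" if p: "p \<in> Delta A" for p
  proof -
    obtain k j where kj: "A$k$j > 0" "p$k \<ge> d" "p$j \<ge> d"
      using big_pair[OF card nn pos p] by (auto simp: d_def)
    have "A$k$j \<in> S" using kj by (auto simp: S_def)
    then have "amin \<le> A$k$j" using fS by (simp add: amin_def)
    moreover have "d powr \<alpha> \<le> p$k powr \<alpha>" "d powr \<alpha> \<le> p$j powr \<alpha>"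
      using kj d0 a by (auto intro!: powr_mono2)
    ultimately have "h0 \<le> A$k$j * p$k powr \<alpha> * p$j powr \<alpha>"
      unfolding h0_def using amin0 by (intro mult_mono) auto
    also have "\<dots> \<le> Hfun A \<alpha> p" unfolding Hfun_def
      by (rule dsum_ge[where f="\<lambda>k j. A$k$j * p$k powr \<alpha> * p$j powr \<alpha>"]) (use nn in auto)
    finally show ?thesis .
  qed
  ultimately show ?thesis by blast
qed

lemma pi_bound:
  fixes A :: "real^'n::finite^'n"
  assumes a: "\<alpha> > 1" and nn: "\<forall>i j. 0 \<le> A$i$j" and p: "p \<in> Delta A"
    and h: "h0 > 0" "Hfun A \<alpha> p \<ge> h0"
  shows "pifun A \<alpha> p $ i \<le> ((\<Sum>j\<in>UNIV. A$i$j) / h0) * p$i"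
proof -
  define y where "y j = p$j powr \<alpha>" for j
  have y0: "y j \<ge> 0" for j by (simp add: y_def)
  have y1: "y j \<le> 1" for j unfolding y_def using Delta_le1[OF p, of j] a by (intro powr_le1) auto
  have yi: "y i \<le> p$i"
  proof -
    have "p$i powr \<alpha> \<le> p$i powr 1" using Delta_le1[OF p, of i] a by (intro powr_mono') auto
    then show ?thesis using Delta_le1[OF p, of i] by (simp add: y_def)
  qed
  define R where "R = (\<Sum>j\<in>UNIV. A$i$j)"
  have R0: "R \<ge> 0" using nn by (auto simp: R_def intro: sum_nonneg)
  have s0: "(\<Sum>j\<in>UNIV. A$i$j * y j) \<ge> 0" using nn y0 by (auto intro!: sum_nonneg)
  have sR: "(\<Sum>j\<in>UNIV. A$i$j * y j) \<le> R"
    unfolding R_def by (rule sum_mono) (use nn y1 in \<open>auto intro: mult_left_le\<close>)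
  have pi: "pifun A \<alpha> p $ i = y i * (\<Sum>j\<in>UNIV. A$i$j * y j) / Hfun A \<alpha> p"
    by (simp add: pifun_def y_def matrix_vector_mult_def vpow_def)
  have num: "y i * (\<Sum>j\<in>UNIV. A$i$j * y j) \<le> p$i * R"
    using yi sR y0 s0 R0 Delta_le1(2)[OF p, of i] by (intro mult_mono) auto
  have "y i * (\<Sum>j\<in>UNIV. A$i$j * y j) / Hfun A \<alpha> p \<le> y i * (\<Sum>j\<in>UNIV. A$i$j * y j) / h0"
    using h y0 s0 by (intro divide_left_mono) auto
  also have "\<dots> \<le> p$i * R / h0" using num h by (simp add: divide_right_mono)
  finally show ?thesis unfolding pi R_def by (simp add: mult.commute)
qed

theorem lemma3p1:
  fixes A :: "real^'n::finite^'n" and \<alpha> :: real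
    and \<Phi> :: "real \<Rightarrow> real^'n \<Rightarrow> real^'n"
  assumes "CARD('n) \<ge> 2"
    and "\<alpha> > 1"
    and "\<forall>i j. A$i$j = A$j$i"
    and "\<forall>i j. 0 \<le> A$i$j"
    and "\<forall>i j. i \<noteq> j \<longrightarrow> A$i$j > 0"
    and "\<forall>i k. (\<Sum>j\<in>UNIV. A$i$j) = (\<Sum>j\<in>UNIV. A$k$j)"
    and "is_flow A \<alpha> \<Phi>"
  shows "(\<forall>t \<ge> 0. \<forall>v \<in> Delta A. \<Phi> t v \<in> Delta A) \<and>
         (\<forall>I. \<forall>v \<in> Delta_I A I. \<forall>t. \<Phi> t v \<in> Delta A \<longleftrightarrow> \<Phi> t v \<in> Delta_I A I)"
proof -
  note card = assms(1) and a = assms(2) and sym = assms(3) and nn = assms(4) and pos = assms(5)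
  have DT: "v \<in> T_Delta 1" if "v \<in> Delta A" for v using that by (simp add: Delta_def T_Delta_def)
  have fl: "\<Phi> 0 v = v" "\<And>s. \<Phi> s v \<in> T_Delta 1"
    "\<And>s. ((\<lambda>s. \<Phi> s v) has_vector_derivative Ffield A \<alpha> (\<Phi> s v)) (at s)"
    if "v \<in> T_Delta 1" for v
    using assms(7) that unfolding is_flow_def by auto
  have inv: "\<Phi> b v \<in> Delta A" if "v \<in> Delta A" "a \<le> b" "\<Phi> a v \<in> Delta A" for a b v
    using invariant[OF nn sym, of "\<lambda>s. \<Phi> s v"] fl[OF DT[OF that(1)]] that by auto
  have P1: "\<forall>t \<ge> 0. \<forall>v \<in> Delta A. \<Phi> t v \<in> Delta A"
    using inv fl DT by fastforce
  obtain h0 where h0: "h0 > 0" "\<forall>p\<in>Delta A. Hfun A \<alpha> p \<ge> h0"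
    using H_lower[OF card a nn pos] by auto
  have P2: "\<Phi> t v \<in> Delta_I A I" if v: "v \<in> Delta_I A I" and xt: "\<Phi> t v \<in> Delta A" for I v t
  proof -
    have vD: "v \<in> Delta A" using v by (simp add: Delta_I_def)
    note f = fl[OF DT[OF vD]]
    have "\<Phi> t v $ i = 0" if i: "i \<in> UNIV - I" for i
    proof -
      define u where "u s = \<Phi> s v $ i" for s
      have u0: "u 0 = 0" using v i f(1) by (simp add: u_def Delta_I_def)
      have di: "(u has_real_derivative - u s + pifun A \<alpha> (proj_Delta A (\<Phi> s v)) $ i) (at s)" for s
        using comp_deriv[OF f(3)[of s], of i] unfolding u_def[abs_def] by (simp add: Ffield_def)
      have ut0: "u t \<ge> 0" using Delta_le1(2)[OF xt] by (simp add: u_def)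
      have "u t \<le> 0"
      proof (cases "t < 0")
        case True
        have "exp t * u t \<le> exp 0 * u 0"
          by (rule exp_mono_sol[OF di]) (use True pi_nonneg[OF nn] in auto)
        then show ?thesis using u0 by (simp add: mult_le_0_iff)
      next
        case False
        show ?thesis
        proof (rule gronwall[OF di, where K = "(\<Sum>j\<in>UNIV. A$i$j) / h0"])
          fix s assume s: "0 \<le> s" "s \<le> t"
          have xs: "\<Phi> s v \<in> Delta A" using inv[OF vD s(1)] f(1) vD by simp
          then have "proj_Delta A (\<Phi> s v) = \<Phi> s v" by (simp add: proj_Delta_def closest_point_self)
          then show "pifun A \<alpha> (proj_Delta A (\<Phi> s v)) $ i \<le> (\<Sum>j\<in>UNIV. A$i$j) / h0 * u s"
            using pi_bound[OF a nn xs h0(1)] h0(2) xs by (simp add: u_def)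
        qed (use u0 False in auto)
      qed
      then show ?thesis using ut0 by (simp add: u_def)
    qed
    then show ?thesis using xt by (simp add: Delta_I_def)
  qed
  show ?thesis using P1 P2 by (auto simp: Delta_I_def)
qed

end
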